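(* Let $x_1,\dots,x_N\in\mathbb{R}^M$ and $y_1,\dots,y_N\in\mathbb{R}$, and let $X_N=[x_1\ \cdots\ x_N]^\top\in\mathbb{R}^{N\times M}$ and $Y_N=[y_1\ \cdots\ y_N]^\top\in\mathbb{R}^N$. Let $\theta_{MN}=X_N^+Y_N$ be the minimum-norm least-squares solution. Let $x\in\mathbb{R}^M$ be a test vector and $y\in\mathbb{R}$ a test label, and set $$\|x_\perp\|^2 := x^\top\left[I-X_N^+X_N\right]x,$$ assumed nonzero. Let $X_{N+1}=[x_1\ \cdots\ x_N\ x]^\top$, $Y_{N+1}=[y_1\ \cdots\ y_N\ y]^\top$, and let $\theta_{N+1}=X_{N+1}^+Y_{N+1}$ be the minimum-norm least-squares solution based on the $N+1$ samples. Then $$\|\theta_{N+1}\|^2=\|\theta_{MN}\|^2+\frac{1}{\|x_\perp\|^2}\left(y-x^\top\theta_{MN}\right)^2 .$$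
   Context: $\|\cdot\|$ is the Euclidean norm. For a data matrix $X$ with $N$ rows and $M$ columns, the pseudo-inverse is $X^+=(X^\top X)^{-1}X^\top$ if $\mathrm{rank}(X^\top X)=M$, and $X^+=X^\top(XX^\top)^{-1}$ otherwise (the Moore–Penrose pseudo-inverse in these full-rank cases). *)

theory Defs
  imports "Jordan_Normal_Form.Matrix"
begin

text \<open>For full column rank it equals (X^T X)^(-1) X^T and for
full row rank it equals X^T (X X^T)^(-1), as in the paper.\<close>
definition pinv :: "real mat \<Rightarrow> real mat" where
  "pinv A = (THE B. B \<in> carrier_mat (dim_col A) (dim_row A) \<and>
      A * B * A = A \<and> B * A * B = B \<and>
      transpose_mat (A * B) = A * B \<and> transpose_mat (B * A) = B * A)"

definition sqnorm :: "real vec \<Rightarrow> real" where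
  "sqnorm v = scalar_prod v v"

end

theory Submission imports Defs "Jordan_Normal_Form.Determinant" begin

definition penrose :: "real mat \<Rightarrow> real mat \<Rightarrow> bool" where
  "penrose A B \<longleftrightarrow> B \<in> carrier_mat (dim_col A) (dim_row A) \<and>
      A * B * A = A \<and> B * A * B = B \<and>
      transpose_mat (A * B) = A * B \<and> transpose_mat (B * A) = B * A"

lemma assoc_dim: "dim_col (A::'a::comm_semiring_0 mat) = dim_row B \<Longrightarrow> dim_col B = dim_row C \<Longrightarrow> A * B * C = A * (B * C)"
  by (rule assoc_mult_mat[of A "dim_row A" "dim_col A" B "dim_col B" C "dim_col C"]) auto

lemma tr_dim: "dim_col (A::'a::comm_semiring_0 mat) = dim_row B \<Longrightarrow> transpose_mat (A * B) = transpose_mat B * transpose_mat A"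
  by (rule transpose_mult[of A "dim_row A" "dim_col A" B "dim_col B"]) auto

lemma assoc_dim_v: "dim_col (A::'a::comm_semiring_0 mat) = dim_row B \<Longrightarrow> dim_col B = dim_vec v \<Longrightarrow> (A * B) *\<^sub>v v = A *\<^sub>v (B *\<^sub>v v)"
  by (rule assoc_mult_mat_vec[of A "dim_row A" "dim_col A" B "dim_col B"]) auto

lemma penrose_unique:
  assumes A: "A \<in> carrier_mat n m" and pB: "penrose A B" and pC: "penrose A C"
  shows "B = C"
proof -
  have B: "B \<in> carrier_mat m n" and C: "C \<in> carrier_mat m n" using pB pC A unfolding penrose_def by auto
  note d = carrier_matD[OF A] carrier_matD[OF B] carrier_matD[OF C]
  have ABA: "A * (B * A) = A" and BAB: "B * (A * B) = B" and tAB: "transpose_mat B * transpose_mat A = A * B"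
    and tBA: "transpose_mat A * transpose_mat B = B * A" using pB d unfolding penrose_def by (auto simp: assoc_dim tr_dim)
  have ACA: "A * (C * A) = A" and CAC: "C * (A * C) = C" and tAC: "transpose_mat C * transpose_mat A = A * C"
    and tCA: "transpose_mat A * transpose_mat C = C * A" using pC d unfolding penrose_def by (auto simp: assoc_dim tr_dim)
  have e1: "transpose_mat A = transpose_mat A * (A * C)"
  proof -
    have "transpose_mat A = transpose_mat (A * (C * A))" using ACA by simp
    also have "\<dots> = transpose_mat A * (A * C)" using d tAC by (simp add: tr_dim assoc_dim)
    finally show ?thesis .
  qed
  have e2: "transpose_mat A = B * (A * transpose_mat A)"
  proof -
    have "transpose_mat A = transpose_mat (A * (B * A))" using ABA by simp
    also have "\<dots> = B * (A * transpose_mat A)" using d tBA by (simp add: tr_dim assoc_dim[symmetric])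
    finally show ?thesis .
  qed
  have "B = B * (A * B)" using BAB by simp
  also have "\<dots> = B * (transpose_mat B * transpose_mat A)" using tAB by simp
  also have "\<dots> = B * (transpose_mat B * (transpose_mat A * (A * C)))" using e1 by simp
  also have "\<dots> = B * ((transpose_mat B * transpose_mat A) * (A * C))" using d by (simp add: assoc_dim)
  also have "\<dots> = (B * (A * B)) * (A * C)" using d tAB by (simp add: assoc_dim)
  also have "\<dots> = B * (A * C)" using BAB by simp
  finally have b: "B = B * (A * C)" .
  have "C = (C * A) * C" using CAC d by (simp add: assoc_dim)
  also have "\<dots> = (transpose_mat A * transpose_mat C) * C" using tCA by simp
  also have "\<dots> = ((B * (A * transpose_mat A)) * transpose_mat C) * C" using e2 by simp
  also have "\<dots> = B * (A * (transpose_mat A * transpose_mat C)) * C" using d by (simp add: assoc_dim)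
  also have "\<dots> = B * (A * ((C * A) * C))" using tCA d by (simp add: assoc_dim)
  also have "\<dots> = B * (A * C)" using CAC d by (simp add: assoc_dim)
  finally show ?thesis using b by simp
qed

lemma mor_mult:
  assumes "\<forall>w\<in>set ws. w \<in> carrier_vec m" "u \<in> carrier_vec m"
  shows "mat_of_rows m ws *\<^sub>v u = vec (length ws) (\<lambda>i. ws ! i \<bullet> u)"
  using assms by (intro eq_vecI) auto

lemma mor_snoc_tr:
  fixes ws :: "real vec list"
  assumes ws: "\<forall>w\<in>set ws. w \<in> carrier_vec m" and z: "z \<in> carrier_vec m"
    and a: "a \<in> carrier_vec (Suc (length ws))"
  shows "transpose_mat (mat_of_rows m (ws @ [z])) *\<^sub>v a
    = transpose_mat (mat_of_rows m ws) *\<^sub>v vec (length ws) (\<lambda>i. a $ i) + a $ (length ws) \<cdot>\<^sub>v z"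
proof (rule eq_vecI)
  show "dim_vec (transpose_mat (mat_of_rows m (ws @ [z])) *\<^sub>v a) =
    dim_vec (transpose_mat (mat_of_rows m ws) *\<^sub>v vec (length ws) (\<lambda>i. a $ i) + a $ (length ws) \<cdot>\<^sub>v z)"
    using z by simp
  fix j assume "j < dim_vec (transpose_mat (mat_of_rows m ws) *\<^sub>v vec (length ws) (\<lambda>i. a $ i) + a $ (length ws) \<cdot>\<^sub>v z)"
  then have j: "j < m" using z by simp
  have "(transpose_mat (mat_of_rows m (ws @ [z])) *\<^sub>v a) $ j
     = (\<Sum>i<Suc (length ws). (ws @ [z]) ! i $ j * a $ i)"
    using j a by (simp add: scalar_prod_def mat_of_rows_index lessThan_atLeast0 col_def)
  also have "\<dots> = (\<Sum>i<length ws. ws ! i $ j * a $ i) + a $ (length ws) * z $ j"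
    by (simp add: nth_append mult.commute)
  also have "\<dots> = (transpose_mat (mat_of_rows m ws) *\<^sub>v vec (length ws) (\<lambda>i. a $ i) + a $ (length ws) \<cdot>\<^sub>v z) $ j"
    using j a z by (simp add: scalar_prod_def mat_of_rows_index lessThan_atLeast0 col_def)
  finally show "(transpose_mat (mat_of_rows m (ws @ [z])) *\<^sub>v a) $ j =
    (transpose_mat (mat_of_rows m ws) *\<^sub>v vec (length ws) (\<lambda>i. a $ i) + a $ (length ws) \<cdot>\<^sub>v z) $ j" .
qed

lemma tr_sp:
  fixes A :: "real mat"
  assumes "A \<in> carrier_mat nr nc" "x \<in> carrier_vec nc" "y \<in> carrier_vec nr"
  shows "x \<bullet> (transpose_mat A *\<^sub>v y) = (A *\<^sub>v x) \<bullet> y"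
proof -
  have "x \<bullet> (transpose_mat A *\<^sub>v y) = (transpose_mat A *\<^sub>v y) \<bullet> x"
    using assms by (intro comm_scalar_prod[of _ nc]) auto
  also have "\<dots> = y \<bullet> (A *\<^sub>v x)" using transpose_vec_mult_scalar assms by blast
  also have "\<dots> = (A *\<^sub>v x) \<bullet> y" using assms by (intro comm_scalar_prod[of _ nr]) auto
  finally show ?thesis .
qed

lemma sp_self_zero:
  fixes v :: "real vec"
  assumes "v \<bullet> v = 0" shows "v = 0\<^sub>v (dim_vec v)"
proof -
  have "(\<Sum>i\<in>{0..<dim_vec v}. v $ i * v $ i) = 0" using assms by (simp add: scalar_prod_def)
  then have "\<forall>i\<in>{0..<dim_vec v}. v $ i * v $ i = 0"
    by (subst (asm) sum_nonneg_eq_0_iff) auto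
  then show ?thesis by (intro eq_vecI) auto
qed

lemma sp_self_nonneg: fixes v :: "real vec" shows "v \<bullet> v \<ge> 0"
  by (simp add: scalar_prod_def sum_nonneg)

definition orthon :: "real vec list \<Rightarrow> bool" where
  "orthon us \<longleftrightarrow> (\<forall>i<length us. \<forall>j<length us. us ! i \<bullet> us ! j = (if i = j then 1 else 0))"

lemma orthon_unit:
  assumes us: "\<forall>u\<in>set us. u \<in> carrier_vec m" and on: "orthon us" and i: "i < length us"
  shows "mat_of_rows m us *\<^sub>v (us ! i) = unit_vec (length us) i"
  using us on i by (intro eq_vecI) (auto simp: orthon_def)

lemma orthon_UUt_vec:
  assumes us: "\<forall>u\<in>set us. u \<in> carrier_vec m" and on: "orthon us" and w: "w \<in> carrier_vec (length us)"
  shows "mat_of_rows m us *\<^sub>v (transpose_mat (mat_of_rows m us) *\<^sub>v w) = w"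
proof (rule eq_vecI)
  fix i assume "i < dim_vec w"
  then have i: "i < length us" using w by simp
  have ui: "us ! i \<in> carrier_vec m" using us i by auto
  have "(mat_of_rows m us *\<^sub>v (transpose_mat (mat_of_rows m us) *\<^sub>v w)) $ i
     = us ! i \<bullet> (transpose_mat (mat_of_rows m us) *\<^sub>v w)" using i ui by simp
  also have "\<dots> = (mat_of_rows m us *\<^sub>v us ! i) \<bullet> w"
    by (rule tr_sp[of _ "length us" m]) (use ui w in auto)
  also have "\<dots> = w $ i" using orthon_unit[OF us on i] i w by simp
  finally show "(mat_of_rows m us *\<^sub>v (transpose_mat (mat_of_rows m us) *\<^sub>v w)) $ i = w $ i" .
qed (use w in auto)

lemma orthon_UUt:
  assumes us: "\<forall>u\<in>set us. u \<in> carrier_vec m" and on: "orthon us"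
  shows "mat_of_rows m us * transpose_mat (mat_of_rows m us) = 1\<^sub>m (length us)"
  using us on by (intro eq_matI) (auto simp: orthon_def)

lemma gs_exists:
  fixes xs :: "real vec list"
  assumes "\<forall>v\<in>set xs. v \<in> carrier_vec m"
  shows "\<exists>us. (\<forall>u\<in>set us. u \<in> carrier_vec m) \<and> orthon us \<and>
     (\<forall>u\<in>set us. \<forall>v\<in>carrier_vec m. (\<forall>z\<in>set xs. z \<bullet> v = 0) \<longrightarrow> u \<bullet> v = 0) \<and>
     (\<forall>z\<in>set xs. transpose_mat (mat_of_rows m us) *\<^sub>v (mat_of_rows m us *\<^sub>v z) = z)"
  using assms
proof (induction xs rule: rev_induct)
  case Nil
  show ?case by (rule exI[of _ "[]"]) (simp add: orthon_def)
next
  case (snoc x xs)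
  then have xs: "\<forall>v\<in>set xs. v \<in> carrier_vec m" and x: "x \<in> carrier_vec m" by auto
  from snoc.IH[OF xs] obtain us where us: "\<forall>u\<in>set us. u \<in> carrier_vec m" and on: "orthon us"
    and perp: "\<forall>u\<in>set us. \<forall>v\<in>carrier_vec m. (\<forall>z\<in>set xs. z \<bullet> v = 0) \<longrightarrow> u \<bullet> v = 0"
    and rep: "\<forall>z\<in>set xs. transpose_mat (mat_of_rows m us) *\<^sub>v (mat_of_rows m us *\<^sub>v z) = z"
    by blast
  define U where "U = mat_of_rows m us"
  define r where "r = length us"
  have U: "U \<in> carrier_mat r m" unfolding U_def r_def by simp
  have Ut: "transpose_mat U \<in> carrier_mat m r" using U by simp
  define p where "p = x - transpose_mat U *\<^sub>v (U *\<^sub>v x)"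
  have p: "p \<in> carrier_vec m" unfolding p_def using x U by simp
  have UUt: "U *\<^sub>v (transpose_mat U *\<^sub>v w) = w" if "w \<in> carrier_vec r" for w
    using orthon_UUt_vec[OF us on] that unfolding U_def r_def by simp
  have Up: "U *\<^sub>v p = 0\<^sub>v r"
  proof -
    have "U *\<^sub>v p = U *\<^sub>v x - U *\<^sub>v (transpose_mat U *\<^sub>v (U *\<^sub>v x))"
      unfolding p_def using U x by (intro mult_minus_distrib_mat_vec) auto
    also have "\<dots> = U *\<^sub>v x - U *\<^sub>v x" using UUt[of "U *\<^sub>v x"] U x by simp
    also have "\<dots> = 0\<^sub>v r" using U x by (intro eq_vecI) auto
    finally show ?thesis .
  qed
  have ip: "us ! i \<bullet> p = 0" if "i < r" for i
  proof -
    have "(U *\<^sub>v p) $ i = us ! i \<bullet> p" using that us unfolding U_def r_def by simp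
    then show ?thesis using Up that by simp
  qed
  have Uperp: "U *\<^sub>v v = 0\<^sub>v r" if v: "v \<in> carrier_vec m" and vz: "\<forall>z\<in>set (xs @ [x]). z \<bullet> v = 0" for v
    using perp v vz us unfolding U_def r_def by (intro eq_vecI) auto
  have pv: "p \<bullet> v = 0" if v: "v \<in> carrier_vec m" and vz: "\<forall>z\<in>set (xs @ [x]). z \<bullet> v = 0" for v
  proof -
    have "p \<bullet> v = x \<bullet> v - (transpose_mat U *\<^sub>v (U *\<^sub>v x)) \<bullet> v"
      unfolding p_def using x v U by (intro minus_scalar_prod_distrib[of _ m]) auto
    also have "(transpose_mat U *\<^sub>v (U *\<^sub>v x)) \<bullet> v = (U *\<^sub>v x) \<bullet> (U *\<^sub>v v)"
      using transpose_vec_mult_scalar[OF U v, of "U *\<^sub>v x"] U x by simp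
    finally show ?thesis using Uperp[OF v vz] vz U x by simp
  qed
  have zp: "z \<bullet> p = 0" if z: "z \<in> set xs" for z
  proof -
    have zc: "z \<in> carrier_vec m" using z xs by auto
    have "z \<bullet> p = z \<bullet> x - z \<bullet> (transpose_mat U *\<^sub>v (U *\<^sub>v x))"
      unfolding p_def using x zc U by (intro scalar_prod_minus_distrib[of _ m]) auto
    also have "z \<bullet> (transpose_mat U *\<^sub>v (U *\<^sub>v x)) = (U *\<^sub>v z) \<bullet> (U *\<^sub>v x)"
      using tr_sp[OF U zc, of "U *\<^sub>v x"] U x by simp
    also have "z \<bullet> x = (transpose_mat U *\<^sub>v (U *\<^sub>v z)) \<bullet> x" using rep z unfolding U_def by simp
    also have "\<dots> = (U *\<^sub>v z) \<bullet> (U *\<^sub>v x)"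
      using transpose_vec_mult_scalar[OF U x, of "U *\<^sub>v z"] U zc by simp
    finally show ?thesis by simp
  qed
  show ?case
  proof (cases "p = 0\<^sub>v m")
    case True
    have "transpose_mat U *\<^sub>v (U *\<^sub>v x) = x"
    proof (rule eq_vecI)
      fix i assume "i < dim_vec x"
      then have "p $ i = 0" using True x by simp
      then show "(transpose_mat U *\<^sub>v (U *\<^sub>v x)) $ i = x $ i"
        unfolding p_def using \<open>i < dim_vec x\<close> U x by simp
    qed (use U x in simp)
    then show ?thesis using us on perp rep unfolding U_def
      by (intro exI[of _ us]) auto
  next
    case False
    define s where "s = p \<bullet> p"
    have s0: "s \<noteq> 0" using sp_self_zero[of p] False p unfolding s_def by auto
    have spos: "s > 0" using s0 sp_self_nonneg[of p] unfolding s_def by linarith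
    define q where "q = (1 / sqrt s) \<cdot>\<^sub>v p"
    have q: "q \<in> carrier_vec m" unfolding q_def using p by simp
    define us' where "us' = us @ [q]"
    have us': "\<forall>u\<in>set us'. u \<in> carrier_vec m" using us q unfolding us'_def by auto
    have qq: "q \<bullet> q = 1"
    proof -
      have "q \<bullet> q = (1 / sqrt s) * ((1 / sqrt s) * s)" unfolding q_def s_def using p by simp
      also have "\<dots> = 1" using spos by (simp add: field_simps)
      finally show ?thesis .
    qed
    have uq: "us ! i \<bullet> q = 0" if "i < r" for i
      unfolding q_def using ip[OF that] p us that unfolding r_def by (subst scalar_prod_smult_distrib[of _ m]) auto
    have qu: "q \<bullet> us ! i = 0" if "i < r" for i
      using uq[OF that] comm_scalar_prod[of q m "us ! i"] q us that unfolding r_def by auto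
    have on': "orthon us'"
      unfolding orthon_def us'_def
    proof (intro allI impI)
      fix i j assume i: "i < length (us @ [q])" and j: "j < length (us @ [q])"
      show "(us @ [q]) ! i \<bullet> (us @ [q]) ! j = (if i = j then 1 else 0)"
        using on i j uq qu qq unfolding orthon_def r_def
        by (cases "i < length us"; cases "j < length us") (auto simp: nth_append)
    qed
    have perp': "\<forall>u\<in>set us'. \<forall>v\<in>carrier_vec m. (\<forall>z\<in>set (xs @ [x]). z \<bullet> v = 0) \<longrightarrow> u \<bullet> v = 0"
    proof (intro ballI impI)
      fix u v assume u: "u \<in> set us'" and v: "v \<in> carrier_vec m" and vz: "\<forall>z\<in>set (xs @ [x]). z \<bullet> v = 0"
      show "u \<bullet> v = 0"
      proof (cases "u = q")
        case True
        then show ?thesis unfolding q_def using pv[OF v vz] p v by simp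
      next
        case False
        then have "u \<in> set us" using u unfolding us'_def by auto
        then show ?thesis using perp v vz by auto
      qed
    qed
    define U' where "U' = mat_of_rows m us'"
    have rep_gen: "transpose_mat U' *\<^sub>v (U' *\<^sub>v z) = transpose_mat U *\<^sub>v (U *\<^sub>v z) + (q \<bullet> z) \<cdot>\<^sub>v q"
      if zc: "z \<in> carrier_vec m" for z
    proof -
      have U'z: "U' *\<^sub>v z = vec (Suc r) (\<lambda>i. us' ! i \<bullet> z)"
        unfolding U'_def using mor_mult[OF us' zc] unfolding us'_def r_def by simp
      have "transpose_mat U' *\<^sub>v (U' *\<^sub>v z) = transpose_mat U *\<^sub>v vec r (\<lambda>i. (U' *\<^sub>v z) $ i) + (U' *\<^sub>v z) $ r \<cdot>\<^sub>v q"
        unfolding U'_def us'_def U_def r_def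
        by (rule mor_snoc_tr[OF us q]) (use U'z in \<open>simp add: us'_def r_def U'_def\<close>)
      also have "vec r (\<lambda>i. (U' *\<^sub>v z) $ i) = U *\<^sub>v z"
        using U'z mor_mult[OF us zc] unfolding U_def r_def us'_def by (intro eq_vecI) (auto simp: nth_append)
      also have "(U' *\<^sub>v z) $ r = q \<bullet> z" using U'z unfolding us'_def r_def by simp
      finally show ?thesis .
    qed
    have rep': "\<forall>z\<in>set (xs @ [x]). transpose_mat U' *\<^sub>v (U' *\<^sub>v z) = z"
    proof
      fix z assume z: "z \<in> set (xs @ [x])"
      then have zc: "z \<in> carrier_vec m" using xs x by auto
      show "transpose_mat U' *\<^sub>v (U' *\<^sub>v z) = z"
      proof (cases "z \<in> set xs")
        case True
        have "q \<bullet> z = 0"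
        proof -
          have "q \<bullet> z = (1 / sqrt s) * (p \<bullet> z)" unfolding q_def using p zc by simp
          also have "p \<bullet> z = z \<bullet> p" using comm_scalar_prod[OF p zc] .
          finally show ?thesis using zp[OF True] by simp
        qed
        then show ?thesis using rep_gen[OF zc] rep True U zc unfolding U_def
          by (simp add: U_def) (use zc q in \<open>intro eq_vecI, auto\<close>)
      next
        case False
        then have zx: "z = x" using z by auto
        have px: "p \<bullet> x = s"
        proof -
          have xe: "x = p + transpose_mat U *\<^sub>v (U *\<^sub>v x)"
            unfolding p_def using x U by (intro eq_vecI) auto
          have "p \<bullet> x = p \<bullet> p + p \<bullet> (transpose_mat U *\<^sub>v (U *\<^sub>v x))"
            by (subst xe, rule scalar_prod_add_distrib[of _ m]) (use p U x in auto)
          also have "p \<bullet> (transpose_mat U *\<^sub>v (U *\<^sub>v x)) = 0"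
            using tr_sp[OF U p, of "U *\<^sub>v x"] Up U x by simp
          finally show ?thesis unfolding s_def by simp
        qed
        have "(q \<bullet> x) \<cdot>\<^sub>v q = p"
        proof -
          have "q \<bullet> x = (1 / sqrt s) * s" unfolding q_def using p x px by simp
          then have "(q \<bullet> x) \<cdot>\<^sub>v q = ((1 / sqrt s) * s * (1 / sqrt s)) \<cdot>\<^sub>v p"
            unfolding q_def by (simp add: smult_smult_assoc)
          also have "(1 / sqrt s) * s * (1 / sqrt s) = 1" using spos by (simp add: field_simps)
          finally show ?thesis by simp
        qed
        then show ?thesis using rep_gen[OF zc] zx unfolding p_def using x U
          by (intro eq_vecI) auto
      qed
    qed
    show ?thesis using us' on' perp' rep' unfolding U'_def by blast
  qed
qed

lemma pinv_exists:
  fixes xs :: "real vec list"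
  assumes xs: "\<forall>v\<in>set xs. v \<in> carrier_vec m"
  shows "\<exists>B. penrose (mat_of_rows m xs) B"
proof -
  from gs_exists[OF xs] obtain us where us: "\<forall>u\<in>set us. u \<in> carrier_vec m" and on: "orthon us"
    and perp: "\<forall>u\<in>set us. \<forall>v\<in>carrier_vec m. (\<forall>z\<in>set xs. z \<bullet> v = 0) \<longrightarrow> u \<bullet> v = 0"
    and rep: "\<forall>z\<in>set xs. transpose_mat (mat_of_rows m us) *\<^sub>v (mat_of_rows m us *\<^sub>v z) = z"
    by blast
  define A where "A = mat_of_rows m xs"
  define n where "n = length xs"
  define U where "U = mat_of_rows m us"
  define r where "r = length us"
  have A: "A \<in> carrier_mat n m" unfolding A_def n_def by simp
  have U: "U \<in> carrier_mat r m" unfolding U_def r_def by simp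
  define G where "G = A * transpose_mat U"
  have G: "G \<in> carrier_mat n r" unfolding G_def using A U by simp
  define Gr where "Gr = transpose_mat G * G"
  have Gr: "Gr \<in> carrier_mat r r" unfolding Gr_def using G by simp
  have UUt: "U *\<^sub>v (transpose_mat U *\<^sub>v w) = w" if "w \<in> carrier_vec r" for w
    using orthon_UUt_vec[OF us on] that unfolding U_def r_def by simp
  have det: "det Gr \<noteq> 0"
  proof
    assume "det Gr = 0"
    then obtain a where a: "a \<in> carrier_vec r" and a0: "a \<noteq> 0\<^sub>v r" and Ga: "Gr *\<^sub>v a = 0\<^sub>v r"
      using det_0_iff_vec_prod_zero[OF Gr] by blast
    have "(G *\<^sub>v a) \<bullet> (G *\<^sub>v a) = a \<bullet> (transpose_mat G *\<^sub>v (G *\<^sub>v a))"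
      using tr_sp[OF G a, of "G *\<^sub>v a"] G a by simp
    also have "transpose_mat G *\<^sub>v (G *\<^sub>v a) = Gr *\<^sub>v a" unfolding Gr_def using G a by simp
    finally have "(G *\<^sub>v a) \<bullet> (G *\<^sub>v a) = 0" using Ga a by simp
    then have Ga0: "G *\<^sub>v a = 0\<^sub>v n" using sp_self_zero[of "G *\<^sub>v a"] G by simp
    define w where "w = transpose_mat U *\<^sub>v a"
    have w: "w \<in> carrier_vec m" unfolding w_def using U a by simp
    have Aw: "A *\<^sub>v w = 0\<^sub>v n" using Ga0 unfolding w_def G_def using A U a by simp
    have zw: "\<forall>z\<in>set xs. z \<bullet> w = 0"
    proof
      fix z assume "z \<in> set xs"
      then obtain i where i: "i < n" and zi: "z = xs ! i" unfolding n_def by (auto simp: in_set_conv_nth)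
      have "(A *\<^sub>v w) $ i = xs ! i \<bullet> w" using i xs unfolding A_def n_def by simp
      then show "z \<bullet> w = 0" using Aw i zi by simp
    qed
    have "U *\<^sub>v w = 0\<^sub>v r"
      using perp w zw us unfolding U_def r_def by (intro eq_vecI) auto
    then have "a = 0\<^sub>v r" using UUt[OF a] unfolding w_def by simp
    then show False using a0 by simp
  qed
  from det_non_zero_imp_unit[OF Gr det, of "()"]
  obtain Gi where Gi: "Gi \<in> carrier_mat r r" and GiGr: "Gi * Gr = 1\<^sub>m r" and GrGi: "Gr * Gi = 1\<^sub>m r"
    unfolding Units_def ring_mat_def by auto
  note d = carrier_matD[OF A] carrier_matD[OF U] carrier_matD[OF G] carrier_matD[OF Gi]
  have trGr: "transpose_mat Gr = Gr" unfolding Gr_def using d by (simp add: tr_dim)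
  have trGi: "transpose_mat Gi = Gi"
  proof -
    have "transpose_mat Gi * Gr = 1\<^sub>m r"
      using arg_cong[OF GrGi, of transpose_mat] trGr Gi Gr by (simp add: tr_dim)
    have "transpose_mat Gi = transpose_mat Gi * (Gr * Gi)" using GrGi Gi by simp
    also have "\<dots> = (transpose_mat Gi * Gr) * Gi" using Gi Gr by (simp add: assoc_dim)
    finally show ?thesis using \<open>transpose_mat Gi * Gr = 1\<^sub>m r\<close> Gi by simp
  qed
  have F1: "U * (transpose_mat U * X) = X" if "dim_row X = r" for X
  proof -
    have "U * (transpose_mat U * X) = (U * transpose_mat U) * X" using d that by (simp add: assoc_dim)
    also have "U * transpose_mat U = 1\<^sub>m r" using orthon_UUt[OF us on] unfolding U_def r_def .
    finally show ?thesis using that by simp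
  qed
  have F2: "Gi * (transpose_mat G * (G * X)) = X" if "dim_row X = r" for X
  proof -
    have "Gi * (transpose_mat G * (G * X)) = (Gi * Gr) * X" unfolding Gr_def using d that by (simp add: assoc_dim)
    then show ?thesis using GiGr that by simp
  qed
  have F4: "A = G * U"
  proof -
    have "transpose_mat U * U * transpose_mat A = transpose_mat A"
    proof (rule mat_col_eqI)
      fix j assume "j < dim_col (transpose_mat A)"
      then have j: "j < n" using d by simp
      have xj: "xs ! j \<in> carrier_vec m" using xs j unfolding n_def by auto
      have "col (transpose_mat U * U * transpose_mat A) j = (transpose_mat U * U) *\<^sub>v col (transpose_mat A) j"
        by (rule col_mult2[of _ m m _ n]) (use A U j in auto)
      also have "col (transpose_mat A) j = xs ! j" using j xj A unfolding A_def n_def by simp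
      also have "(transpose_mat U * U) *\<^sub>v xs ! j = xs ! j" using rep xj j U unfolding n_def U_def by simp
      finally show "col (transpose_mat U * U * transpose_mat A) j = col (transpose_mat A) j"
        using j xj A unfolding A_def n_def by simp
    qed (use d in auto)
    then have "A = transpose_mat (transpose_mat U * U * transpose_mat A)" by (metis transpose_transpose)
    also have "\<dots> = G * U" unfolding G_def using d by (simp add: tr_dim assoc_dim)
    finally show ?thesis .
  qed
  define B where "B = transpose_mat U * (Gi * transpose_mat G)"
  have B: "B \<in> carrier_mat m n" unfolding B_def using d by auto
  have AB: "A * B = G * (Gi * transpose_mat G)"
    unfolding B_def by (subst F4) (simp add: d assoc_dim F1)
  have BA: "B * A = transpose_mat U * U"
    unfolding B_def by (subst F4) (simp add: d assoc_dim F2)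
  have "penrose A B"
    unfolding penrose_def
  proof (intro conjI)
    show "B \<in> carrier_mat (dim_col A) (dim_row A)" using B d by simp
    have "A * B * A = (G * (Gi * transpose_mat G)) * (G * U)" using AB F4 by simp
    also have "\<dots> = G * U" using d by (simp add: assoc_dim F2)
    finally show "A * B * A = A" using F4 by simp
    show "B * A * B = B" using BA d unfolding B_def by (simp add: assoc_dim F1)
    show "transpose_mat (A * B) = A * B" using AB d trGi by (simp add: assoc_dim tr_dim)
    show "transpose_mat (B * A) = B * A" using BA d by (simp add: assoc_dim tr_dim)
  qed
  then show ?thesis unfolding A_def by blast
qed

lemma pinv_penrose:
  fixes xs :: "real vec list"
  assumes xs: "\<forall>v\<in>set xs. v \<in> carrier_vec m"
  shows "penrose (mat_of_rows m xs) (pinv (mat_of_rows m xs))"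
proof -
  let ?A = "mat_of_rows m xs"
  have eq: "pinv ?A = (THE B. penrose ?A B)" unfolding pinv_def penrose_def ..
  obtain B where B: "penrose ?A B" using pinv_exists[OF xs] by blast
  have "\<exists>!B. penrose ?A B"
  proof (rule ex1I[of _ B])
    show "penrose ?A B" by (rule B)
    fix C assume "penrose ?A C"
    then show "C = B" using penrose_unique[OF mat_of_rows_carrier(1) _ B] by blast
  qed
  then show ?thesis unfolding eq by (rule theI')
qed

lemma pinv_solve:
  assumes A: "A \<in> carrier_mat n m" and pB: "penrose A B" and b: "b \<in> carrier_vec n"
    and w: "w \<in> carrier_vec n" and c: "c = transpose_mat A *\<^sub>v w"
    and ne: "transpose_mat A *\<^sub>v (A *\<^sub>v c) = transpose_mat A *\<^sub>v b"
  shows "B *\<^sub>v b = c"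
proof -
  have B: "B \<in> carrier_mat m n" using pB A unfolding penrose_def by auto
  note d = carrier_matD[OF A] carrier_matD[OF B]
  have ABA: "A * (B * A) = A" and BAB: "B * (A * B) = B" and tAB: "transpose_mat B * transpose_mat A = A * B"
    and tBA: "transpose_mat A * transpose_mat B = B * A" using pB d unfolding penrose_def by (auto simp: assoc_dim tr_dim)
  have cc: "c \<in> carrier_vec m" using c A w by simp
  have e1: "B * (transpose_mat B * transpose_mat A) = B" using BAB tAB by simp
  have e2: "(B * A) * transpose_mat A = transpose_mat A"
  proof -
    have "transpose_mat A = transpose_mat (A * (B * A))" using ABA by simp
    also have "\<dots> = (B * A) * transpose_mat A" using d tBA by (simp add: tr_dim assoc_dim)
    finally show ?thesis by simp
  qed
  have "B *\<^sub>v b = (B * (transpose_mat B * transpose_mat A)) *\<^sub>v b" using e1 by simp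
  also have "\<dots> = B *\<^sub>v (transpose_mat B *\<^sub>v (transpose_mat A *\<^sub>v b))" using d b by (simp add: assoc_dim_v)
  also have "\<dots> = B *\<^sub>v (transpose_mat B *\<^sub>v (transpose_mat A *\<^sub>v (A *\<^sub>v c)))" using ne by simp
  also have "\<dots> = (B * (transpose_mat B * transpose_mat A)) *\<^sub>v (A *\<^sub>v c)" using d cc by (simp add: assoc_dim_v)
  also have "\<dots> = (B * A) *\<^sub>v (transpose_mat A *\<^sub>v w)" using e1 c d cc by (simp add: assoc_dim_v)
  also have "\<dots> = ((B * A) * transpose_mat A) *\<^sub>v w" using d w by (simp add: assoc_dim_v)
  also have "\<dots> = c" using e2 c by simp
  finally show ?thesis .
qed

theorem theorem3:
  fixes M N :: nat and xs :: "real vec list" and ys :: "real list"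
    and x :: "real vec" and y :: real
  assumes len_xs: "length xs = N" and len_ys: "length ys = N"
    and xs_dim: "\<forall>v \<in> set xs. v \<in> carrier_vec M"
    and x_dim: "x \<in> carrier_vec M"
    and perp_nz: "scalar_prod x ((1\<^sub>m M - pinv (mat_of_rows M xs) * mat_of_rows M xs) *\<^sub>v x) \<noteq> 0"
  shows "sqnorm (pinv (mat_of_rows M (xs @ [x])) *\<^sub>v vec_of_list (ys @ [y]))
       = sqnorm (pinv (mat_of_rows M xs) *\<^sub>v vec_of_list ys)
         + (y - scalar_prod x (pinv (mat_of_rows M xs) *\<^sub>v vec_of_list ys)) ^ 2
           / scalar_prod x ((1\<^sub>m M - pinv (mat_of_rows M xs) * mat_of_rows M xs) *\<^sub>v x)"
proof -
  define X where "X = mat_of_rows M xs"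
  define B where "B = pinv X"
  define X' where "X' = mat_of_rows M (xs @ [x])"
  define B' where "B' = pinv X'"
  define Y where "Y = vec_of_list ys"
  define Y' where "Y' = vec_of_list (ys @ [y])"
  have xs': "\<forall>v\<in>set (xs @ [x]). v \<in> carrier_vec M" using xs_dim x_dim by auto
  have X: "X \<in> carrier_mat N M" unfolding X_def using mat_of_rows_carrier(1)[of M xs] len_xs by simp
  have X': "X' \<in> carrier_mat (Suc N) M" unfolding X'_def using mat_of_rows_carrier(1)[of M "xs @ [x]"] len_xs by simp
  have pB: "penrose X B" unfolding X_def B_def by (rule pinv_penrose[OF xs_dim])
  have pB': "penrose X' B'" unfolding X'_def B'_def by (rule pinv_penrose[OF xs'])
  have "B \<in> carrier_mat (dim_col X) (dim_row X)" using pB unfolding penrose_def by blast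
  then have B: "B \<in> carrier_mat M N" using X by simp
  have Y: "Y \<in> carrier_vec N" unfolding Y_def by (rule carrier_vecI) (simp add: len_ys)
  have Y': "Y' \<in> carrier_vec (Suc N)" unfolding Y'_def by (rule carrier_vecI) (simp add: len_ys)
  note d = carrier_matD[OF X] carrier_matD[OF B]
  have XBX: "X * (B * X) = X" and BXB: "B * (X * B) = B" and tXB: "transpose_mat B * transpose_mat X = X * B"
    and tBX: "transpose_mat X * transpose_mat B = B * X" using pB d unfolding penrose_def by (auto simp: assoc_dim tr_dim)
  define Q where "Q = B * X"
  have Q: "Q \<in> carrier_mat M M" unfolding Q_def using B X by simp
  have tQ: "transpose_mat Q = Q" unfolding Q_def using tBX d by (simp add: tr_dim)
  have "Q * Q = (B * (X * B)) * X" unfolding Q_def using d by (simp add: assoc_dim)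
  then have QQ: "Q * Q = Q" unfolding Q_def using BXB by simp
  define \<theta> where "\<theta> = B *\<^sub>v Y"
  have th: "\<theta> \<in> carrier_vec M" unfolding \<theta>_def using B Y by simp
  define p where "p = x - Q *\<^sub>v x"
  have p: "p \<in> carrier_vec M" unfolding p_def using Q x_dim by simp
  define s where "s = x \<bullet> ((1\<^sub>m M - Q) *\<^sub>v x)"
  have sp: "s = x \<bullet> p"
  proof -
    have "(1\<^sub>m M - Q) *\<^sub>v x = p" unfolding p_def using Q x_dim
      by (subst minus_mult_distrib_mat_vec[of _ M M]) auto
    then show ?thesis unfolding s_def by simp
  qed
  have s0: "s \<noteq> 0" using perp_nz unfolding s_def Q_def B_def X_def .
  define \<alpha> where "\<alpha> = y - x \<bullet> \<theta>"
  define t where "t = \<alpha> / s"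
  define c where "c = \<theta> + t \<cdot>\<^sub>v p"
  have cc: "c \<in> carrier_vec M" unfolding c_def using th p by simp
  have Xp: "X *\<^sub>v p = 0\<^sub>v N"
  proof -
    have "X *\<^sub>v p = X *\<^sub>v x - X *\<^sub>v (Q *\<^sub>v x)" unfolding p_def using X Q x_dim
      by (intro mult_minus_distrib_mat_vec) auto
    also have "X *\<^sub>v (Q *\<^sub>v x) = (X * (B * X)) *\<^sub>v x" unfolding Q_def using d x_dim by (simp add: assoc_dim_v)
    also have "\<dots> = X *\<^sub>v x" using XBX by simp
    finally show ?thesis using X x_dim by (auto intro!: eq_vecI)
  qed
  have Qp: "Q *\<^sub>v p = 0\<^sub>v M"
  proof -
    have "Q *\<^sub>v p = Q *\<^sub>v x - Q *\<^sub>v (Q *\<^sub>v x)" unfolding p_def using Q x_dim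
      by (intro mult_minus_distrib_mat_vec) auto
    also have "Q *\<^sub>v (Q *\<^sub>v x) = (Q * Q) *\<^sub>v x" using Q x_dim by simp
    finally show ?thesis using QQ Q x_dim by (auto intro!: eq_vecI)
  qed
  have xp: "x \<bullet> p = s" using sp by simp
  have "Q *\<^sub>v \<theta> = (B * (X * B)) *\<^sub>v Y" unfolding Q_def \<theta>_def using d Y by (simp add: assoc_dim_v)
  then have thQ: "Q *\<^sub>v \<theta> = \<theta>" unfolding \<theta>_def using BXB by simp
  have thp: "\<theta> \<bullet> p = 0"
  proof -
    have "\<theta> \<bullet> p = \<theta> \<bullet> x - \<theta> \<bullet> (Q *\<^sub>v x)" unfolding p_def using th x_dim Q
      by (intro scalar_prod_minus_distrib[of _ M]) auto
    also have "\<theta> \<bullet> (Q *\<^sub>v x) = (Q *\<^sub>v \<theta>) \<bullet> x" using tr_sp[OF Q th x_dim] tQ by simp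
    finally show ?thesis using thQ by simp
  qed
  have pp: "p \<bullet> p = s"
  proof -
    have "p \<bullet> p = x \<bullet> p - (Q *\<^sub>v x) \<bullet> p" unfolding p_def using p x_dim Q
      by (intro minus_scalar_prod_distrib[of _ M]) auto
    also have "(Q *\<^sub>v x) \<bullet> p = x \<bullet> (Q *\<^sub>v p)" using tr_sp[OF Q x_dim p] tQ by simp
    finally show ?thesis using Qp xp x_dim by simp
  qed
  have xc: "x \<bullet> c = y"
  proof -
    have "x \<bullet> c = x \<bullet> \<theta> + t * (x \<bullet> p)" unfolding c_def using x_dim th p
      by (subst scalar_prod_add_distrib[of _ M]) auto
    also have "\<dots> = y" unfolding t_def \<alpha>_def using xp s0 by simp
    finally show ?thesis .
  qed
  have Xc: "X *\<^sub>v c = X *\<^sub>v \<theta>"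
  proof -
    have "X *\<^sub>v c = X *\<^sub>v \<theta> + X *\<^sub>v (t \<cdot>\<^sub>v p)" unfolding c_def using X th p
      by (intro mult_add_distrib_mat_vec) auto
    also have "X *\<^sub>v (t \<cdot>\<^sub>v p) = t \<cdot>\<^sub>v (X *\<^sub>v p)" using X p by (intro mult_mat_vec) auto
    finally show ?thesis using Xp X th by (auto intro!: eq_vecI)
  qed
  have XtX: "transpose_mat X *\<^sub>v (X *\<^sub>v \<theta>) = transpose_mat X *\<^sub>v Y"
  proof -
    have e: "transpose_mat X * (X * B) = transpose_mat X"
    proof -
      have "transpose_mat X = transpose_mat (X * (B * X))" using XBX by simp
      also have "\<dots> = transpose_mat X * (X * B)" using d tXB by (simp add: tr_dim assoc_dim[symmetric])
      finally show ?thesis by simp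
    qed
    have "transpose_mat X *\<^sub>v (X *\<^sub>v \<theta>) = (transpose_mat X * (X * B)) *\<^sub>v Y"
      unfolding \<theta>_def using d Y by (simp add: assoc_dim_v)
    then show ?thesis using e by simp
  qed
  have X'v: "X' *\<^sub>v v = vec (Suc N) (\<lambda>i. if i < N then (X *\<^sub>v v) $ i else x \<bullet> v)" if v: "v \<in> carrier_vec M" for v
    unfolding X'_def using mor_mult[OF xs' v] mor_mult[OF xs_dim v] len_xs unfolding X_def
    by (intro eq_vecI) (auto simp: nth_append)
  have X'tv: "transpose_mat X' *\<^sub>v a = transpose_mat X *\<^sub>v vec N (\<lambda>i. a $ i) + a $ N \<cdot>\<^sub>v x"
    if a: "a \<in> carrier_vec (Suc N)" for a
    unfolding X'_def X_def using mor_snoc_tr[OF xs_dim x_dim, of a] a len_xs by simp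
  have ne: "transpose_mat X' *\<^sub>v (X' *\<^sub>v c) = transpose_mat X' *\<^sub>v Y'"
  proof -
    have "vec N (\<lambda>i. (X' *\<^sub>v c) $ i) = X *\<^sub>v \<theta>" using X'v[OF cc] Xc X th by (intro eq_vecI) auto
    moreover have "(X' *\<^sub>v c) $ N = y" using X'v[OF cc] xc by simp
    moreover have "vec N (\<lambda>i. Y' $ i) = Y" unfolding Y'_def Y_def using len_ys
      by (intro eq_vecI) (auto simp: vec_of_list_index nth_append)
    moreover have "Y' $ N = y" unfolding Y'_def using len_ys by (simp add: vec_of_list_index nth_append)
    ultimately show ?thesis using X'tv[of "X' *\<^sub>v c"] X'tv[OF Y'] X' cc XtX by simp
  qed
  have BY: "B = transpose_mat X * (transpose_mat B * B)"
  proof -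
    have "B = (B * X) * B" using BXB d by (simp add: assoc_dim)
    also have "\<dots> = transpose_mat X * (transpose_mat B * B)" using tBX[symmetric] d by (simp add: assoc_dim)
    finally show ?thesis .
  qed
  define z1 where "z1 = transpose_mat B *\<^sub>v (B *\<^sub>v Y)"
  define z2 where "z2 = transpose_mat B *\<^sub>v (B *\<^sub>v (X *\<^sub>v x))"
  have z1: "z1 \<in> carrier_vec N" unfolding z1_def using B Y by simp
  have z2: "z2 \<in> carrier_vec N" unfolding z2_def using B X x_dim by simp
  have thz: "\<theta> = transpose_mat X *\<^sub>v z1"
  proof -
    have "\<theta> = (transpose_mat X * (transpose_mat B * B)) *\<^sub>v Y" unfolding \<theta>_def using BY by simp
    then show ?thesis unfolding z1_def using d Y by (simp add: assoc_dim_v)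
  qed
  have Qxz: "Q *\<^sub>v x = transpose_mat X *\<^sub>v z2"
  proof -
    have "Q *\<^sub>v x = B *\<^sub>v (X *\<^sub>v x)" unfolding Q_def using d x_dim by (simp add: assoc_dim_v)
    also have "\<dots> = (transpose_mat X * (transpose_mat B * B)) *\<^sub>v (X *\<^sub>v x)" using BY by simp
    finally show ?thesis unfolding z2_def using d x_dim by (simp add: assoc_dim_v)
  qed
  define w where "w = vec (Suc N) (\<lambda>i. if i < N then (z1 - t \<cdot>\<^sub>v z2) $ i else t)"
  have w: "w \<in> carrier_vec (Suc N)" unfolding w_def by simp
  have cw: "c = transpose_mat X' *\<^sub>v w"
  proof -
    have "vec N (\<lambda>i. w $ i) = z1 - t \<cdot>\<^sub>v z2" unfolding w_def using z1 z2 by (intro eq_vecI) auto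
    then have "transpose_mat X' *\<^sub>v w = transpose_mat X *\<^sub>v (z1 - t \<cdot>\<^sub>v z2) + t \<cdot>\<^sub>v x"
      using X'tv[OF w] unfolding w_def by simp
    also have "transpose_mat X *\<^sub>v (z1 - t \<cdot>\<^sub>v z2) = transpose_mat X *\<^sub>v z1 - t \<cdot>\<^sub>v (transpose_mat X *\<^sub>v z2)"
      using X z1 z2 by (simp add: mult_minus_distrib_mat_vec[of _ M N] mult_mat_vec[of _ M N])
    finally have "transpose_mat X' *\<^sub>v w = \<theta> - t \<cdot>\<^sub>v (Q *\<^sub>v x) + t \<cdot>\<^sub>v x" using thz Qxz by simp
    then show ?thesis unfolding c_def p_def using th Q x_dim by (auto intro!: eq_vecI simp: algebra_simps)
  qed
  have sol: "B' *\<^sub>v Y' = c" by (rule pinv_solve[OF X' pB' Y' w cw ne])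
  have "sqnorm c = \<theta> \<bullet> \<theta> + t * t * s"
  proof -
    have "c \<bullet> c = \<theta> \<bullet> c + (t \<cdot>\<^sub>v p) \<bullet> c" unfolding c_def using th p cc c_def
      by (intro add_scalar_prod_distrib[of _ M]) auto
    also have "\<theta> \<bullet> c = \<theta> \<bullet> \<theta> + \<theta> \<bullet> (t \<cdot>\<^sub>v p)" unfolding c_def using th p
      by (intro scalar_prod_add_distrib[of _ M]) auto
    also have "(t \<cdot>\<^sub>v p) \<bullet> c = t * (p \<bullet> c)" using p cc by simp
    also have "p \<bullet> c = p \<bullet> \<theta> + p \<bullet> (t \<cdot>\<^sub>v p)" unfolding c_def using th p
      by (intro scalar_prod_add_distrib[of _ M]) auto
    also have "p \<bullet> \<theta> = \<theta> \<bullet> p" using comm_scalar_prod[OF p th] .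
    finally show ?thesis unfolding sqnorm_def using thp pp th p by simp
  qed
  then have "sqnorm (B' *\<^sub>v Y') = sqnorm \<theta> + \<alpha> ^ 2 / s"
    using sol s0 unfolding t_def sqnorm_def by (simp add: power2_eq_square)
  then show ?thesis unfolding B'_def X'_def Y'_def \<theta>_def B_def X_def Y_def \<alpha>_def s_def Q_def .
qed

end
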